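(* Suppose (S) and (L) hold and: (MA1) $\operatorname{cov}(W_i^K,W_j^K)=\mathbb 1(i=j)+\rho\mathbb 1(|i-j|=1)$ for $i,j\in\{1,\dots,K\}$, with $|\rho|<1/2$; (MA2) there is $C<\infty$ with $\sup_{i\le K}|\pi_i^K|\le C/\sqrt K$ for all $K$; (MA3) $\rho\sum_{i=1}^{K-1}\pi_i^K\pi_{i+1}^K/\sum_{i=1}^K(\pi_i^K)^2$ converges to a value in $[-\infty,\infty]$ as $K\to\infty$; (MA4) there is $\epsilon>0$ with $\operatorname{var}(\sum_{i=1}^K\pi_i^KW_i^K)>\epsilon$ for all $K$. Then (P) holds.
   Context: For each $K$, $W^K=(W_1^K,\dots,W_K^K)$ is a random vector and $\pi^K\in\mathbb R^K$. $S\in\{0,1\}^K$ is random, independent of everything else, with moments $\operatorname{var}_S$ etc.; $d_1=\sum_iS_i$, $d_2=K-d_1$. (S) $S$ is uniform over vectors in $\{0,1\}^K$ with exactly $d_1$ ones. (L) $d_1,K\to\infty$ with $d_2/d_1\to r\in(0,\infty)$. (P): (P1) there are $0<\epsilon\le M<\infty$ with $\epsilon\le\operatorname{var}(\sum_i\pi_i^KW_i^K)\le M$ for all $K$; (P2) $\operatorname{var}_S(\sum_{i,j}S_iS_j\operatorname{cov}(\pi_i^KW_i^K,\pi_j^KW_j^K))\to0$ and the same with $S_i,S_j$ replaced by $1-S_i,1-S_j$; (P3) $\sum_i\operatorname{var}(\pi_i^KW_i^K)/\operatorname{var}(\sum_i\pi_i^KW_i^K)$ converges to a finite limit. *)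

theory Defs
  imports "HOL-Probability.Probability"
begin

definition cov :: "'a measure \<Rightarrow> ('a \<Rightarrow> real) \<Rightarrow> ('a \<Rightarrow> real) \<Rightarrow> real" where
  "cov M X Y = (\<integral>x. (X x - (\<integral>y. X y \<partial>M)) * (Y x - (\<integral>y. Y y \<partial>M)) \<partial>M)"

definition var :: "'a measure \<Rightarrow> ('a \<Rightarrow> real) \<Rightarrow> real" where
  "var M X = (\<integral>x. (X x - (\<integral>y. X y \<partial>M))\<^sup>2 \<partial>M)"

text \<open>The law of S for given K and d1: uniform over the 0/1 vectors on {1..K} with exactly
  d1 ones, encoded by their support (the set of indices i with S_i = 1).\<close>
definition sel_law :: "nat \<Rightarrow> nat \<Rightarrow> nat set pmf" where
  "sel_law K d = pmf_of_set {T. T \<subseteq> {1..K} \<and> card T = d}"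

definition cond_P :: "(nat \<Rightarrow> 'a measure) \<Rightarrow> (nat \<Rightarrow> nat \<Rightarrow> 'a \<Rightarrow> real)
    \<Rightarrow> (nat \<Rightarrow> nat \<Rightarrow> real) \<Rightarrow> (nat \<Rightarrow> nat) \<Rightarrow> bool" where
  "cond_P M W p d1 \<longleftrightarrow>
     (\<exists>\<epsilon> Mb. 0 < \<epsilon> \<and> \<epsilon> \<le> Mb \<and>
        (\<forall>K\<ge>1. \<epsilon> \<le> var (M K) (\<lambda>x. \<Sum>i=1..K. p K i * W K i x)
               \<and> var (M K) (\<lambda>x. \<Sum>i=1..K. p K i * W K i x) \<le> Mb))
   \<and> (\<lambda>K. var (measure_pmf (sel_law K (d1 K)))
          (\<lambda>T. \<Sum>i\<in>T. \<Sum>j\<in>T. cov (M K) (\<lambda>x. p K i * W K i x) (\<lambda>x. p K j * W K j x)))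
       \<longlonglongrightarrow> 0
   \<and> (\<lambda>K. var (measure_pmf (sel_law K (d1 K)))
          (\<lambda>T. \<Sum>i\<in>{1..K} - T. \<Sum>j\<in>{1..K} - T.
                 cov (M K) (\<lambda>x. p K i * W K i x) (\<lambda>x. p K j * W K j x)))
       \<longlonglongrightarrow> 0
   \<and> (\<exists>L::real. (\<lambda>K. (\<Sum>i=1..K. var (M K) (\<lambda>x. p K i * W K i x))
                      / var (M K) (\<lambda>x. \<Sum>i=1..K. p K i * W K i x)) \<longlonglongrightarrow> L)"

end

theory Submission
  imports Defs
begin


lemma L2_int:
  fixes f :: "'a \<Rightarrow> real"
  assumes "prob_space M" "f \<in> borel_measurable M" "integrable M (\<lambda>x. (f x)\<^sup>2)"
  shows "integrable M f"
proof -
  interpret prob_space M by fact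
  show ?thesis using assms(2,3) by (rule square_integrable_imp_integrable)
qed

lemma L2_prod:
  fixes f g :: "'a \<Rightarrow> real"
  assumes "f \<in> borel_measurable M" "integrable M (\<lambda>x. (f x)\<^sup>2)"
      "g \<in> borel_measurable M" "integrable M (\<lambda>x. (g x)\<^sup>2)"
  shows "integrable M (\<lambda>x. f x * g x)"
proof -
  have i: "integrable M (\<lambda>x. (f x)\<^sup>2 + (g x)\<^sup>2)" using assms by simp
  have m: "(\<lambda>x. f x * g x) \<in> borel_measurable M" using assms by simp
  have ae: "AE x in M. norm (f x * g x) \<le> norm ((f x)\<^sup>2 + (g x)\<^sup>2)"
  proof (rule AE_I2)
    fix x
    have "2 * \<bar>f x * g x\<bar> \<le> (f x)\<^sup>2 + (g x)\<^sup>2"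
    proof -
      have "0 \<le> (\<bar>f x\<bar> - \<bar>g x\<bar>)\<^sup>2" by simp
      then show ?thesis by (simp add: power2_diff abs_mult)
    qed
    then show "norm (f x * g x) \<le> norm ((f x)\<^sup>2 + (g x)\<^sup>2)" by simp
  qed
  show ?thesis by (rule Bochner_Integration.integrable_bound[OF i m ae])
qed

lemma L2_shift:
  fixes f :: "'a \<Rightarrow> real"
  assumes "prob_space M" "f \<in> borel_measurable M" "integrable M (\<lambda>x. (f x)\<^sup>2)"
  shows "integrable M (\<lambda>x. (f x - c)\<^sup>2)"
proof -
  have i: "integrable M f" using L2_int assms by blast
  interpret prob_space M by fact
  have "(\<lambda>x. (f x - c)\<^sup>2) = (\<lambda>x. (f x)\<^sup>2 - 2 * c * f x + c\<^sup>2)"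
    by (simp add: power2_diff algebra_simps)
  then show ?thesis using i assms by simp
qed

lemma cov_scale:
  "cov M (\<lambda>x. a * X x) (\<lambda>x. b * Y x) = a * b * cov M X Y"
proof -
  have "cov M (\<lambda>x. a * X x) (\<lambda>x. b * Y x) =
     (\<integral>x. a * b * ((X x - (\<integral>y. X y \<partial>M)) * (Y x - (\<integral>y. Y y \<partial>M))) \<partial>M)"
    unfolding cov_def by (simp add: algebra_simps)
  then show ?thesis unfolding cov_def by simp
qed

lemma var_cov: "var M X = cov M X X"
  unfolding var_def cov_def by (simp add: power2_eq_square)

lemma var_sum:
  fixes X :: "nat \<Rightarrow> 'a \<Rightarrow> real"
  assumes "prob_space M" "finite I"
    "\<And>i. i \<in> I \<Longrightarrow> X i \<in> borel_measurable M"
    "\<And>i. i \<in> I \<Longrightarrow> integrable M (\<lambda>x. (X i x)\<^sup>2)"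
  shows "var M (\<lambda>x. \<Sum>i\<in>I. X i x) = (\<Sum>i\<in>I. \<Sum>j\<in>I. cov M (X i) (X j))"
proof -
  define \<mu> where "\<mu> i = (\<integral>y. X i y \<partial>M)" for i
  have ii: "\<And>i. i \<in> I \<Longrightarrow> integrable M (X i)" using L2_int assms by blast
  have mu: "(\<integral>y. (\<Sum>i\<in>I. X i y) \<partial>M) = (\<Sum>i\<in>I. \<mu> i)"
    unfolding \<mu>_def using ii by (simp add: integral_sum)
  have pi: "\<And>i j. i \<in> I \<Longrightarrow> j \<in> I \<Longrightarrow> integrable M (\<lambda>x. (X i x - \<mu> i) * (X j x - \<mu> j))"
    using assms(3,4) L2_shift[OF assms(1)] by (intro L2_prod) (auto simp del: power2_diff)
  have "var M (\<lambda>x. \<Sum>i\<in>I. X i x) = (\<integral>x. (\<Sum>i\<in>I. \<Sum>j\<in>I. (X i x - \<mu> i) * (X j x - \<mu> j)) \<partial>M)"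
    unfolding var_def mu power2_eq_square
    by (simp add: sum_subtractf[symmetric] sum_product)
  also have "\<dots> = (\<Sum>i\<in>I. \<Sum>j\<in>I. (\<integral>x. (X i x - \<mu> i) * (X j x - \<mu> j) \<partial>M))"
    using pi by (simp add: integral_sum)
  finally show ?thesis unfolding cov_def \<mu>_def .
qed



lemma adj_sum:
  fixes q :: "nat \<Rightarrow> real"
  shows "(\<Sum>i=1..K. \<Sum>j=1..K. q i * q j * (if \<bar>int i - int j\<bar> = 1 then 1 else 0)) = 2 * (\<Sum>i\<in>{1..<K}. q i * q (i+1))"
proof (induction K)
  case 0
  then show ?case by simp
next
  case (Suc K)
  have r1: "(\<Sum>j=1..K. q (Suc K) * q j * (if \<bar>int (Suc K) - int j\<bar> = 1 then 1 else 0)) = (if K \<ge> 1 then q (Suc K) * q K else 0)"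
  proof -
    have "(\<Sum>j=1..K. q (Suc K) * q j * (if \<bar>int (Suc K) - int j\<bar> = 1 then 1 else 0)) = (\<Sum>j\<in>{1..K}. if j = K then q (Suc K) * q j else 0)"
      by (rule sum.cong) auto
    then show ?thesis by (simp add: sum.delta)
  qed
  have r2: "(\<Sum>i=1..K. q i * q (Suc K) * (if \<bar>int i - int (Suc K)\<bar> = 1 then 1 else 0)) = (if K \<ge> 1 then q (Suc K) * q K else 0)"
  proof -
    have "(\<Sum>i=1..K. q i * q (Suc K) * (if \<bar>int i - int (Suc K)\<bar> = 1 then 1 else 0)) = (\<Sum>i\<in>{1..K}. if i = K then q (Suc K) * q i else 0)"
      by (rule sum.cong) auto
    then show ?thesis by (simp add: sum.delta)
  qed
  have "(\<Sum>i=1..Suc K. \<Sum>j=1..Suc K. q i * q j * (if \<bar>int i - int j\<bar> = 1 then 1 else 0)) =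
     (\<Sum>i=1..K. \<Sum>j=1..K. q i * q j * (if \<bar>int i - int j\<bar> = 1 then 1 else 0))
     + (\<Sum>i=1..K. q i * q (Suc K) * (if \<bar>int i - int (Suc K)\<bar> = 1 then 1 else 0))
     + (\<Sum>j=1..K. q (Suc K) * q j * (if \<bar>int (Suc K) - int j\<bar> = 1 then 1 else 0))"
  proof -
    have sp: "\<And>f::nat\<Rightarrow>real. (\<Sum>i=1..Suc K. f i) = (\<Sum>i=1..K. f i) + f (Suc K)" by simp
    show ?thesis unfolding sp sum.distrib by simp
  qed
  also have "\<dots> = 2 * (\<Sum>i\<in>{1..<Suc K}. q i * q (i+1))"
    unfolding Suc.IH r1 r2 by (cases "K = 0") (auto simp: algebra_simps)
  finally show ?case .
qed

lemma diag_sum: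
  fixes q :: "nat \<Rightarrow> real"
  shows "(\<Sum>i=1..K. \<Sum>j=1..K. q i * q j * (if i = j then 1 else 0)) = (\<Sum>i=1..K. (q i)\<^sup>2)"
proof (rule sum.cong[OF refl])
  fix i assume i: "i \<in> {1..K}"
  have "(\<Sum>j=1..K. q i * q j * (if i = j then 1 else 0)) = (\<Sum>j\<in>{1..K}. if j = i then q i * q j else 0)"
    by (rule sum.cong) auto
  then show "(\<Sum>j=1..K. q i * q j * (if i = j then 1 else 0)) = (q i)\<^sup>2" using i by (simp add: sum.delta power2_eq_square)
qed

lemma aux_ineq:
  fixes x y S c1 c2 :: real
  shows "\<bar>x\<bar> \<le> S - c1 / 2 \<Longrightarrow> \<bar>y\<bar> \<le> (c1 + c2) / 2 \<Longrightarrow> \<bar>x + y\<bar> \<le> \<bar>x\<bar> + \<bar>y\<bar> \<Longrightarrow> \<bar>x + y\<bar> \<le> S + c2 - c2 / 2"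
  by argo

lemma cs_adj_aux:
  fixes q :: "nat \<Rightarrow> real"
  shows "\<bar>\<Sum>i\<in>{1..<Suc n}. q i * q (i+1)\<bar> \<le> (\<Sum>i=1..Suc n. (q i)\<^sup>2) - (q (Suc n))\<^sup>2 / 2"
proof (induction n)
  case 0
  then show ?case by simp
next
  case (Suc n)
  have e1: "(\<Sum>i\<in>{1..<Suc (Suc n)}. q i * q (i+1)) = (\<Sum>i\<in>{1..<Suc n}. q i * q (i+1)) + q (Suc n) * q (Suc (Suc n))"
    by simp
  have e2: "(\<Sum>i=1..Suc (Suc n). (q i)\<^sup>2) = (\<Sum>i=1..Suc n. (q i)\<^sup>2) + (q (Suc (Suc n)))\<^sup>2"
    by simp
  have am: "\<bar>q (Suc n) * q (Suc (Suc n))\<bar> \<le> ((q (Suc n))\<^sup>2 + (q (Suc (Suc n)))\<^sup>2) / 2"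
  proof -
    have "0 \<le> (\<bar>q (Suc n)\<bar> - \<bar>q (Suc (Suc n))\<bar>)\<^sup>2" by simp
    then show ?thesis by (simp add: power2_diff abs_mult)
  qed
  have tri: "\<bar>(\<Sum>i\<in>{1..<Suc n}. q i * q (i+1)) + q (Suc n) * q (Suc (Suc n))\<bar> \<le> \<bar>\<Sum>i\<in>{1..<Suc n}. q i * q (i+1)\<bar> + \<bar>q (Suc n) * q (Suc (Suc n))\<bar>"
    by (rule abs_triangle_ineq)
  show ?case unfolding e1 e2 by (rule aux_ineq[OF Suc.IH am tri])
qed

lemma cs_adj:
  fixes q :: "nat \<Rightarrow> real"
  shows "\<bar>\<Sum>i\<in>{1..<K}. q i * q (i+1)\<bar> \<le> (\<Sum>i=1..K. (q i)\<^sup>2)"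
proof (cases K)
  case 0
  then show ?thesis by simp
next
  case (Suc n)
  have "0 \<le> (q (Suc n))\<^sup>2 / 2" by simp
  then show ?thesis using cs_adj_aux[of q n] unfolding Suc by linarith
qed



definition hh :: "nat \<Rightarrow> nat \<Rightarrow> nat \<Rightarrow> real" where
  "hh K d a = (\<Prod>j<a. (real d - real j) / (real K - real j))"

lemma hh_zero: "d < a \<Longrightarrow> hh K d a = 0"
  unfolding hh_def by (rule prod_zero) (auto intro: bexI[of _ d])

lemma hh_Suc: "hh K d (Suc a) = hh K d a * ((real d - real a) / (real K - real a))"
  unfolding hh_def by simp

lemma hh_nonneg: assumes "d \<le> K" shows "0 \<le> hh K d a"
proof (cases "a \<le> d")
  case True
  then show ?thesis unfolding hh_def using assms
    by (intro prod_nonneg) (auto intro!: divide_nonneg_nonneg)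
next
  case False
  then show ?thesis using hh_zero by simp
qed

lemma hh_le1: assumes "d \<le> K" shows "hh K d a \<le> 1"
proof (cases "a \<le> d")
  case True
  then show ?thesis unfolding hh_def using assms
    by (intro prod_le_1) (auto intro!: divide_nonneg_nonneg simp: divide_le_eq_1)
next
  case False
  then show ?thesis using hh_zero by simp
qed

lemma hh_mult: assumes "d \<le> K" shows "hh K d (a + b) \<le> hh K d a * hh K d b"
proof (induction b)
  case 0
  then show ?case by (simp add: hh_def)
next
  case (Suc b)
  show ?case
  proof (cases "d < a + Suc b")
    case True
    then show ?thesis using hh_zero[OF True] hh_nonneg[OF assms] by simp
  next
    case False
    define g where "g = (real d - real (a + b)) / (real K - real (a + b))"
    define g' where "g' = (real d - real b) / (real K - real b)"
    have K1: "real K - real (a + b) > 0" "real K - real b > 0" using False assms by auto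
    have g0: "0 \<le> g" unfolding g_def using False K1 by auto
    have ad: "real a * real d \<le> real a * real K" using assms by (simp add: mult_left_mono)
    have poly: "(real d - real (a+b)) * (real K - real b) \<le> (real d - real b) * (real K - real (a+b))"
      using ad by (simp add: algebra_simps)
    have gg: "g \<le> g'" unfolding g_def g'_def using K1 poly
      by (simp add: divide_le_eq le_divide_eq mult.commute)
    have "hh K d (a + Suc b) = hh K d (a + b) * g" unfolding g_def by (simp add: hh_Suc)
    also have "\<dots> \<le> hh K d a * hh K d b * g" using Suc.IH g0 by (rule mult_right_mono)
    also have "\<dots> \<le> hh K d a * hh K d b * g'"
      using gg hh_nonneg[OF assms] by (intro mult_left_mono) auto
    also have "\<dots> = hh K d a * hh K d (Suc b)" unfolding g'_def by (simp add: hh_Suc)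
    finally show ?thesis .
  qed
qed

lemma binom_hh: assumes "a \<le> d" "d \<le> K"
  shows "real ((K - a) choose (d - a)) = real (K choose d) * hh K d a"
  using assms(1)
proof (induction a)
  case 0
  then show ?case by (simp add: hh_def)
next
  case (Suc a)
  have IH: "real ((K - a) choose (d - a)) = real (K choose d) * hh K d a" using Suc by simp
  have e: "Suc (K - Suc a) * ((K - Suc a) choose (d - Suc a)) = (Suc (K - Suc a) choose Suc (d - Suc a)) * Suc (d - Suc a)"
    by (rule Suc_times_binomial_eq)
  have e1: "Suc (K - Suc a) = K - a" "Suc (d - Suc a) = d - a" using Suc.prems assms by auto
  have "real (K - a) * real ((K - Suc a) choose (d - Suc a)) = real ((K - a) choose (d - a)) * real (d - a)"
    using e unfolding e1 by (metis of_nat_mult)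
  then have "real ((K - Suc a) choose (d - Suc a)) = real ((K - a) choose (d - a)) * real (d - a) / real (K - a)"
    using Suc.prems assms by (simp add: field_simps)
  also have "\<dots> = real (K choose d) * hh K d (Suc a)"
    using Suc.prems assms by (simp add: IH hh_Suc of_nat_diff)
  finally show ?case .
qed

lemma card_superset:
  assumes "finite U" "card U = K" "d \<le> K" "A \<subseteq> U"
  shows "real (card {T. T \<subseteq> U \<and> card T = d \<and> A \<subseteq> T}) = real (card {T. T \<subseteq> U \<and> card T = d}) * hh K d (card A)"
proof (cases "card A \<le> d")
  case True
  have fA: "finite A" using assms finite_subset by blast
  have img: "{T. T \<subseteq> U \<and> card T = d \<and> A \<subseteq> T} = (\<lambda>T'. T' \<union> A) ` {T'. T' \<subseteq> U - A \<and> card T' = d - card A}"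
  proof (intro equalityI subsetI)
    fix T assume "T \<in> {T. T \<subseteq> U \<and> card T = d \<and> A \<subseteq> T}"
    then have T: "T \<subseteq> U" "card T = d" "A \<subseteq> T" by auto
    have "card (T - A) = d - card A" using T fA by (simp add: card_Diff_subset)
    moreover have "T = (T - A) \<union> A" using T by auto
    ultimately show "T \<in> (\<lambda>T'. T' \<union> A) ` {T'. T' \<subseteq> U - A \<and> card T' = d - card A}"
      using T by blast
  next
    fix T assume "T \<in> (\<lambda>T'. T' \<union> A) ` {T'. T' \<subseteq> U - A \<and> card T' = d - card A}"
    then obtain T' where T': "T' \<subseteq> U - A" "card T' = d - card A" "T = T' \<union> A" by auto
    have fT': "finite T'" using T' assms finite_subset by blast
    have "T' \<inter> A = {}" using T' by blast
    then have "card T = card T' + card A" using T' fT' fA by (simp add: card_Un_disjoint)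
    then show "T \<in> {T. T \<subseteq> U \<and> card T = d \<and> A \<subseteq> T}" using T' True assms by auto
  qed
  have inj: "inj_on (\<lambda>T'. T' \<union> A) {T'. T' \<subseteq> U - A \<and> card T' = d - card A}"
    by (rule inj_onI) blast
  have "card {T. T \<subseteq> U \<and> card T = d \<and> A \<subseteq> T} = card {T'. T' \<subseteq> U - A \<and> card T' = d - card A}"
    unfolding img by (rule card_image[OF inj])
  also have "\<dots> = (K - card A) choose (d - card A)"
    using assms fA by (simp add: n_subsets card_Diff_subset)
  finally have 1: "card {T. T \<subseteq> U \<and> card T = d \<and> A \<subseteq> T} = (K - card A) choose (d - card A)" .
  have 2: "card {T. T \<subseteq> U \<and> card T = d} = K choose d" using assms by (simp add: n_subsets)
  show ?thesis unfolding 1 2 using binom_hh[OF True assms(3)] by simp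
next
  case False
  have "{T. T \<subseteq> U \<and> card T = d \<and> A \<subseteq> T} = {}"
  proof -
    { fix T assume "T \<subseteq> U" "card T = d" "A \<subseteq> T"
      then have fT: "finite T" using assms(1) finite_subset by blast
      have "card A \<le> card T" by (rule card_mono[OF fT \<open>A \<subseteq> T\<close>])
      then have "card A \<le> d" using \<open>card T = d\<close> by simp
      with False have False by simp }
    then show ?thesis by blast
  qed
  moreover have "hh K d (card A) = 0" using hh_zero[of d "card A"] False by simp
  ultimately show ?thesis by (simp only: card.empty)
qed



definition Ev :: "'b set \<Rightarrow> ('b \<Rightarrow> real) \<Rightarrow> real" where
  "Ev S g = (\<Sum>T\<in>S. g T) / real (card S)"

definition Vr :: "'b set \<Rightarrow> ('b \<Rightarrow> real) \<Rightarrow> real" where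
  "Vr S g = Ev S (\<lambda>T. (g T)\<^sup>2) - (Ev S g)\<^sup>2"

lemma Ev_cong: "(\<And>T. T \<in> S \<Longrightarrow> f T = g T) \<Longrightarrow> Ev S f = Ev S g"
  unfolding Ev_def by (metis sum.cong)

lemma Vr_cong: "(\<And>T. T \<in> S \<Longrightarrow> f T = g T) \<Longrightarrow> Vr S f = Vr S g"
  unfolding Vr_def by (metis (mono_tags, lifting) Ev_cong)

lemma Ev_sum: "Ev S (\<lambda>T. \<Sum>x\<in>X. g x T) = (\<Sum>x\<in>X. Ev S (g x))"
  unfolding Ev_def by (simp add: sum.swap[of _ S] sum_divide_distrib)

lemma Ev_cmult: "Ev S (\<lambda>T. a * g T) = a * Ev S g"
  unfolding Ev_def by (simp add: sum_distrib_left)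

lemma Ev_add: "Ev S (\<lambda>T. f T + g T) = Ev S f + Ev S g"
  unfolding Ev_def by (simp add: sum.distrib add_divide_distrib)

lemma Ev_diff: "Ev S (\<lambda>T. f T - g T) = Ev S f - Ev S g"
  unfolding Ev_def by (simp add: sum_subtractf diff_divide_distrib)

lemma Ev_const: "finite S \<Longrightarrow> S \<noteq> {} \<Longrightarrow> Ev S (\<lambda>T. a) = a"
  unfolding Ev_def by simp

lemma Vr_alt:
  assumes "finite S" "S \<noteq> {}"
  shows "Vr S f = (\<Sum>T\<in>S. (f T - Ev S f)\<^sup>2) / real (card S)"
proof -
  define m where "m = Ev S f"
  have "(\<Sum>T\<in>S. (f T - m)\<^sup>2) / real (card S) = Ev S (\<lambda>T. (f T - m)\<^sup>2)" unfolding Ev_def ..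
  also have "\<dots> = Ev S (\<lambda>T. (f T)\<^sup>2 - (2 * m) * f T + m\<^sup>2)"
    by (rule Ev_cong) (simp add: power2_diff)
  also have "\<dots> = Ev S (\<lambda>T. (f T)\<^sup>2) - 2 * m * m + m\<^sup>2"
    using assms by (simp add: Ev_add Ev_diff Ev_cmult Ev_const m_def)
  finally show ?thesis unfolding Vr_def m_def by (simp add: power2_eq_square)
qed

lemma Vr_nonneg: "finite S \<Longrightarrow> S \<noteq> {} \<Longrightarrow> 0 \<le> Vr S f"
  by (simp add: Vr_alt sum_nonneg)

lemma var_pmf_Vr:
  assumes "finite S" "S \<noteq> {}"
  shows "var (measure_pmf (pmf_of_set S)) f = Vr S f"
  unfolding var_def Vr_alt[OF assms] using assms by (simp add: integral_pmf_of_set Ev_def)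

lemma Vr_diff:
  assumes "finite S" "S \<noteq> {}"
  shows "Vr S (\<lambda>T. f T - g T) \<le> 2 * Vr S f + 2 * Vr S g"
proof -
  have "Vr S (\<lambda>T. f T - g T) + Vr S (\<lambda>T. f T + g T) = 2 * Vr S f + 2 * Vr S g"
  proof -
    have a: "Ev S (\<lambda>T. (f T - g T)\<^sup>2) + Ev S (\<lambda>T. (f T + g T)\<^sup>2) = 2 * Ev S (\<lambda>T. (f T)\<^sup>2) + 2 * Ev S (\<lambda>T. (g T)\<^sup>2)"
    proof -
      have "Ev S (\<lambda>T. (f T - g T)\<^sup>2) + Ev S (\<lambda>T. (f T + g T)\<^sup>2) = Ev S (\<lambda>T. 2 * (f T)\<^sup>2 + 2 * (g T)\<^sup>2)"
        by (simp add: Ev_add[symmetric] power2_diff power2_sum algebra_simps)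
      then show ?thesis by (simp add: Ev_add Ev_cmult)
    qed
    show ?thesis unfolding Vr_def using a by (simp add: Ev_add Ev_diff power2_diff power2_sum algebra_simps)
  qed
  moreover have "0 \<le> Vr S (\<lambda>T. f T + g T)" by (rule Vr_nonneg[OF assms])
  ultimately show ?thesis by linarith
qed



lemma S_fin_ne:
  assumes "d \<le> K"
  shows "finite {T. T \<subseteq> {1..K} \<and> card T = d}" "{T. T \<subseteq> {1..K} \<and> card T = d} \<noteq> {}"
proof -
  show "finite {T. T \<subseteq> {1..K} \<and> card T = d}"
    by (rule finite_subset[of _ "Pow {1..K}"]) auto
  obtain T where "T \<subseteq> {1..K}" "card T = d" using assms obtain_subset_with_card_n[of d "{1..K::nat}"] by auto
  then show "{T. T \<subseteq> {1..K} \<and> card T = d} \<noteq> {}" by blast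
qed

definition Ind :: "nat set \<Rightarrow> nat set \<Rightarrow> real" where
  "Ind A T = (if A \<subseteq> T then 1 else 0)"

lemma P_hh:
  assumes "d \<le> K" "A \<subseteq> {1..K}"
  shows "Ev {T. T \<subseteq> {1..K} \<and> card T = d} (Ind A) = hh K d (card A)"
proof -
  let ?S = "{T. T \<subseteq> {1..K} \<and> card T = d}"
  have fin: "finite ?S" and ne: "?S \<noteq> {}" using S_fin_ne[OF assms(1)] by auto
  have "(\<Sum>T\<in>?S. Ind A T) = (\<Sum>T\<in>{T\<in>?S. A \<subseteq> T}. 1)"
    unfolding Ind_def using fin by (rule sum.inter_filter[symmetric])
  also have "{T\<in>?S. A \<subseteq> T} = {T. T \<subseteq> {1..K} \<and> card T = d \<and> A \<subseteq> T}" by auto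
  also have "(\<Sum>T\<in>{T. T \<subseteq> {1..K} \<and> card T = d \<and> A \<subseteq> T}. 1) = real (card {T. T \<subseteq> {1..K} \<and> card T = d \<and> A \<subseteq> T})"
    by simp
  also have "\<dots> = real (card ?S) * hh K d (card A)"
    by (rule card_superset) (use assms in auto)
  finally show ?thesis unfolding Ev_def using fin ne by (simp add: card_gt_0_iff)
qed

lemma sum_restrict: "finite U \<Longrightarrow> T \<subseteq> U \<Longrightarrow> (\<Sum>i\<in>T. g i) = (\<Sum>i\<in>U. if i \<in> T then g i else (0::real))"
  by (simp add: sum.inter_restrict[symmetric] Int_absorb1)

lemma Q_expand:
  assumes "T \<subseteq> {1..K}"
  shows "(\<Sum>i\<in>T. \<Sum>j\<in>T. c i j) = (\<Sum>i\<in>{1..K}. \<Sum>j\<in>{1..K}. c i j * Ind {i, j} T)"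
proof -
  have r: "\<And>i. (\<Sum>j\<in>T. c i j) = (\<Sum>j\<in>{1..K}. if j \<in> T then c i j else 0)"
    by (rule sum_restrict[OF _ assms]) simp
  have "(\<Sum>i\<in>T. \<Sum>j\<in>T. c i j) = (\<Sum>i\<in>{1..K}. if i \<in> T then (\<Sum>j\<in>T. c i j) else 0)"
    by (rule sum_restrict[OF _ assms]) simp
  also have "\<dots> = (\<Sum>i\<in>{1..K}. if i \<in> T then (\<Sum>j\<in>{1..K}. if j \<in> T then c i j else 0) else 0)"
    by (simp only: r)
  also have "\<dots> = (\<Sum>i\<in>{1..K}. \<Sum>j\<in>{1..K}. c i j * Ind {i, j} T)"
    by (intro sum.cong refl) (auto simp: Ind_def intro!: sum.cong)
  finally show ?thesis .
qed

lemma Ind_mult: "Ind A T * Ind B T = Ind (A \<union> B) T"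
  unfolding Ind_def by auto

lemma Ind_pair: "Ind ({i, j} \<union> {k, l}) T = Ind {i, j} T * Ind {k, l} T"
  unfolding Ind_def by auto

lemma Q2_expand:
  assumes "T \<subseteq> {1..K}"
  shows "(\<Sum>i\<in>T. \<Sum>j\<in>T. c i j)\<^sup>2 = (\<Sum>i\<in>{1..K}. \<Sum>j\<in>{1..K}. \<Sum>k\<in>{1..K}. \<Sum>l\<in>{1..K}.
      c i j * c k l * Ind ({i, j} \<union> {k, l}) T)"
  unfolding Q_expand[OF assms] power2_eq_square sum_distrib_right
  unfolding sum_distrib_left
  by (intro sum.cong refl) (simp only: Ind_pair mult_ac)

lemma sq4: "(\<Sum>i\<in>U. \<Sum>j\<in>U. (a::nat\<Rightarrow>nat\<Rightarrow>real) i j)\<^sup>2 = (\<Sum>i\<in>U. \<Sum>j\<in>U. \<Sum>k\<in>U. \<Sum>l\<in>U. a i j * a k l)"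
  unfolding power2_eq_square sum_distrib_right
  unfolding sum_distrib_left ..

lemma dk:
  assumes "finite U" "i \<in> U"
  shows "(\<Sum>k\<in>U. \<Sum>l\<in>U. c k l * (if k = i then 1 else 0)) = (\<Sum>l\<in>U. (c::nat\<Rightarrow>nat\<Rightarrow>real) i l)"
proof -
  have "(\<Sum>k\<in>U. \<Sum>l\<in>U. c k l * (if k = i then 1 else 0)) = (\<Sum>k\<in>U. if k = i then (\<Sum>l\<in>U. c k l) else 0)"
    by (rule sum.cong) auto
  also have "\<dots> = (\<Sum>l\<in>U. c i l)" using assms by (simp add: sum.delta)
  finally show ?thesis .
qed

lemma dl:
  assumes "finite U" "i \<in> U"
  shows "(\<Sum>k\<in>U. \<Sum>l\<in>U. c k l * (if l = i then 1 else 0)) = (\<Sum>k\<in>U. (c::nat\<Rightarrow>nat\<Rightarrow>real) k i)"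
proof (rule sum.cong[OF refl])
  fix k
  have "(\<Sum>l\<in>U. c k l * (if l = i then 1 else 0)) = (\<Sum>l\<in>U. if l = i then c k l else 0)"
    by (rule sum.cong) auto
  also have "\<dots> = c k i" using assms by (simp add: sum.delta)
  finally show "(\<Sum>l\<in>U. c k l * (if l = i then 1 else 0)) = c k i" .
qed

lemma quad_nonneg:
  fixes c :: "nat \<Rightarrow> nat \<Rightarrow> real"
  assumes dK: "d \<le> K" and c0: "\<And>i j. 0 \<le> c i j" and R0: "0 \<le> R"
    and rows: "\<And>i. i \<in> {1..K} \<Longrightarrow> (\<Sum>l\<in>{1..K}. c i l) \<le> R"
    and cols: "\<And>l. l \<in> {1..K} \<Longrightarrow> (\<Sum>i\<in>{1..K}. c i l) \<le> R"
  shows "Vr {T. T \<subseteq> {1..K} \<and> card T = d} (\<lambda>T. \<Sum>i\<in>T. \<Sum>j\<in>T. c i j) \<le> 4 * real K * R\<^sup>2"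
proof -
  let ?S = "{T. T \<subseteq> {1..K} \<and> card T = d}"
  let ?U = "{1..K}"
  define P where "P A = Ev ?S (Ind A)" for A
  define D where "D i j k l = (if k = i then 1 else 0) + (if k = j then 1 else 0) +
      (if l = i then 1 else 0) + (if l = j then (1::real) else 0)" for i j k l :: nat
  have PA: "A \<subseteq> ?U \<Longrightarrow> P A = hh K d (card A)" for A unfolding P_def by (rule P_hh[OF dK])
  have E1: "Ev ?S (\<lambda>T. \<Sum>i\<in>T. \<Sum>j\<in>T. c i j) = (\<Sum>i\<in>?U. \<Sum>j\<in>?U. c i j * P {i, j})"
    by (subst Ev_cong[OF Q_expand]) (auto simp: Ev_sum Ev_cmult P_def)
  have E2: "Ev ?S (\<lambda>T. (\<Sum>i\<in>T. \<Sum>j\<in>T. c i j)\<^sup>2) =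
      (\<Sum>i\<in>?U. \<Sum>j\<in>?U. \<Sum>k\<in>?U. \<Sum>l\<in>?U. c i j * c k l * P ({i, j} \<union> {k, l}))"
    by (subst Ev_cong[OF Q2_expand]) (auto simp: Ev_sum Ev_cmult P_def)
  have V: "Vr ?S (\<lambda>T. \<Sum>i\<in>T. \<Sum>j\<in>T. c i j) =
      (\<Sum>i\<in>?U. \<Sum>j\<in>?U. \<Sum>k\<in>?U. \<Sum>l\<in>?U. c i j * c k l * (P ({i, j} \<union> {k, l}) - P {i, j} * P {k, l}))"
    unfolding Vr_def E1 E2 unfolding sq4
    by (simp add: sum_subtractf[symmetric] algebra_simps)
  have pt: "P ({i, j} \<union> {k, l}) - P {i, j} * P {k, l} \<le> D i j k l"
    if "i \<in> ?U" "j \<in> ?U" "k \<in> ?U" "l \<in> ?U" for i j k l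
  proof (cases "{i, j} \<inter> {k, l} = {}")
    case True
    have cu: "card ({i, j} \<union> {k, l}) = card {i, j} + card {k, l}"
      by (rule card_Un_disjoint) (use True in auto)
    have "P ({i, j} \<union> {k, l}) = hh K d (card ({i, j} \<union> {k, l}))"
      using that by (intro PA) auto
    also have "\<dots> = hh K d (card {i, j} + card {k, l})" by (simp only: cu)
    also have "\<dots> \<le> P {i, j} * P {k, l}" using that by (simp add: PA hh_mult[OF dK])
    finally have "P ({i, j} \<union> {k, l}) \<le> P {i, j} * P {k, l}" .
    moreover have "0 \<le> D i j k l" unfolding D_def by simp
    ultimately show ?thesis by linarith
  next
    case False
    have "P ({i, j} \<union> {k, l}) \<le> 1" using that by (subst PA) (auto intro: hh_le1[OF dK])
    moreover have "0 \<le> P {i, j} * P {k, l}" using that by (simp add: PA hh_nonneg[OF dK])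
    moreover have "1 \<le> D i j k l" using False unfolding D_def by auto
    ultimately show ?thesis by linarith
  qed
  have "Vr ?S (\<lambda>T. \<Sum>i\<in>T. \<Sum>j\<in>T. c i j) \<le>
      (\<Sum>i\<in>?U. \<Sum>j\<in>?U. \<Sum>k\<in>?U. \<Sum>l\<in>?U. c i j * c k l * D i j k l)"
    unfolding V using pt c0 by (intro sum_mono mult_left_mono) (auto)
  also have "\<dots> = (\<Sum>i\<in>?U. \<Sum>j\<in>?U. c i j * (\<Sum>k\<in>?U. \<Sum>l\<in>?U. c k l * D i j k l))"
    by (simp add: sum_distrib_left mult.assoc)
  also have "\<dots> \<le> (\<Sum>i\<in>?U. \<Sum>j\<in>?U. c i j * (4 * R))"
  proof (intro sum_mono mult_left_mono c0)
    fix i j assume ij: "i \<in> ?U" "j \<in> ?U"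
    have "(\<Sum>k\<in>?U. \<Sum>l\<in>?U. c k l * D i j k l) =
        (\<Sum>l\<in>?U. c i l) + (\<Sum>l\<in>?U. c j l) + (\<Sum>k\<in>?U. c k i) + (\<Sum>k\<in>?U. c k j)"
      using ij unfolding D_def distrib_left sum.distrib by (simp add: dk dl)
    also have "\<dots> \<le> 4 * R" using rows[OF ij(1)] rows[OF ij(2)] cols[OF ij(1)] cols[OF ij(2)] by linarith
    finally show "(\<Sum>k\<in>?U. \<Sum>l\<in>?U. c k l * D i j k l) \<le> 4 * R" .
  qed
  also have "\<dots> = 4 * R * (\<Sum>i\<in>?U. \<Sum>j\<in>?U. c i j)"
    by (simp add: sum_distrib_left sum_distrib_right algebra_simps)
  also have "\<dots> \<le> 4 * R * (\<Sum>i\<in>?U. R)"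
    using rows R0 by (intro mult_left_mono sum_mono) auto
  also have "\<dots> = 4 * real K * R\<^sup>2" by (simp add: power2_eq_square)
  finally show ?thesis .
qed



lemma quad_signed:
  fixes c :: "nat \<Rightarrow> nat \<Rightarrow> real"
  assumes dK: "d \<le> K" and R0: "0 \<le> R"
    and rows: "\<And>i. i \<in> {1..K} \<Longrightarrow> (\<Sum>l\<in>{1..K}. \<bar>c i l\<bar>) \<le> R"
    and cols: "\<And>l. l \<in> {1..K} \<Longrightarrow> (\<Sum>i\<in>{1..K}. \<bar>c i l\<bar>) \<le> R"
  shows "Vr {T. T \<subseteq> {1..K} \<and> card T = d} (\<lambda>T. \<Sum>i\<in>T. \<Sum>j\<in>T. c i j) \<le> 16 * real K * R\<^sup>2"
proof -
  let ?S = "{T. T \<subseteq> {1..K} \<and> card T = d}"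
  define cp where "cp i j = max (c i j) 0" for i j
  define cn where "cn i j = max (- c i j) 0" for i j
  have fin: "finite ?S" and ne: "?S \<noteq> {}" using S_fin_ne[OF dK] by auto
  have eq: "Vr ?S (\<lambda>T. \<Sum>i\<in>T. \<Sum>j\<in>T. c i j) =
      Vr ?S (\<lambda>T. (\<Sum>i\<in>T. \<Sum>j\<in>T. cp i j) - (\<Sum>i\<in>T. \<Sum>j\<in>T. cn i j))"
  proof (rule Vr_cong)
    fix T
    have "\<And>i j. c i j = cp i j - cn i j" unfolding cp_def cn_def by auto
    then show "(\<Sum>i\<in>T. \<Sum>j\<in>T. c i j) = (\<Sum>i\<in>T. \<Sum>j\<in>T. cp i j) - (\<Sum>i\<in>T. \<Sum>j\<in>T. cn i j)"
      by (simp add: sum_subtractf)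
  qed
  have bp: "Vr ?S (\<lambda>T. \<Sum>i\<in>T. \<Sum>j\<in>T. cp i j) \<le> 4 * real K * R\<^sup>2"
  proof (rule quad_nonneg[OF dK _ R0])
    show "\<And>i j. 0 \<le> cp i j" unfolding cp_def by auto
    show "(\<Sum>l\<in>{1..K}. cp i l) \<le> R" if "i \<in> {1..K}" for i
      using rows[OF that] by (smt (verit) cp_def sum_mono abs_ge_self abs_ge_zero max_def)
    show "(\<Sum>i\<in>{1..K}. cp i l) \<le> R" if "l \<in> {1..K}" for l
      using cols[OF that] by (smt (verit) cp_def sum_mono abs_ge_self abs_ge_zero max_def)
  qed
  have bn: "Vr ?S (\<lambda>T. \<Sum>i\<in>T. \<Sum>j\<in>T. cn i j) \<le> 4 * real K * R\<^sup>2"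
  proof (rule quad_nonneg[OF dK _ R0])
    show "\<And>i j. 0 \<le> cn i j" unfolding cn_def by auto
    show "(\<Sum>l\<in>{1..K}. cn i l) \<le> R" if "i \<in> {1..K}" for i
      using rows[OF that] by (smt (verit) cn_def sum_mono abs_ge_minus_self abs_ge_zero max_def)
    show "(\<Sum>i\<in>{1..K}. cn i l) \<le> R" if "l \<in> {1..K}" for l
      using cols[OF that] by (smt (verit) cn_def sum_mono abs_ge_minus_self abs_ge_zero max_def)
  qed
  show ?thesis unfolding eq
    using Vr_diff[OF fin ne, of "\<lambda>T. \<Sum>i\<in>T. \<Sum>j\<in>T. cp i j" "\<lambda>T. \<Sum>i\<in>T. \<Sum>j\<in>T. cn i j"] bp bn
    by linarith
qed

lemma Vr_compl:
  assumes "d \<le> K"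
  shows "Vr {T. T \<subseteq> {1..K} \<and> card T = d} (\<lambda>T. F ({1..K} - T)) = Vr {T. T \<subseteq> {1..K} \<and> card T = K - d} F"
proof -
  let ?S = "{T. T \<subseteq> {1..K} \<and> card T = d}"
  let ?h = "\<lambda>T. {1..K::nat} - T"
  have inj: "inj_on ?h ?S" by (rule inj_onI) auto
  have img: "?h ` ?S = {T. T \<subseteq> {1..K} \<and> card T = K - d}"
  proof (intro equalityI subsetI)
    fix X assume "X \<in> ?h ` ?S"
    then obtain T where "T \<subseteq> {1..K}" "card T = d" "X = {1..K} - T" by auto
    then show "X \<in> {T. T \<subseteq> {1..K} \<and> card T = K - d}"
      by (auto simp: card_Diff_subset finite_subset)
  next
    fix X assume X: "X \<in> {T. T \<subseteq> {1..K} \<and> card T = K - d}"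
    then have "card ({1..K} - X) = d" using assms by (auto simp: card_Diff_subset finite_subset)
    moreover have "X = ?h ({1..K} - X)" using X by auto
    ultimately show "X \<in> ?h ` ?S" by blast
  qed
  have ev: "Ev ?S (\<lambda>T. g (?h T)) = Ev {T. T \<subseteq> {1..K} \<and> card T = K - d} g" for g
  proof -
    have "(\<Sum>X\<in>?h ` ?S. g X) = (\<Sum>T\<in>?S. g (?h T))"
      using sum.reindex[OF inj, of g] unfolding comp_def .
    moreover have "card (?h ` ?S) = card ?S" by (rule card_image[OF inj])
    ultimately show ?thesis unfolding Ev_def img by simp
  qed
  show ?thesis unfolding Vr_def using ev[of F] ev[of "\<lambda>X. (F X)\<^sup>2"] by simp
qed

lemma row_local:
  fixes c :: "nat \<Rightarrow> nat \<Rightarrow> real"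
  assumes B: "\<And>l. l \<in> {1..K} \<Longrightarrow> \<bar>c i l\<bar> \<le> B"
    and loc: "\<And>l. c i l \<noteq> 0 \<Longrightarrow> l \<in> {i - 1..i + 1}" and B0: "0 \<le> B"
  shows "(\<Sum>l\<in>{1..K}. \<bar>c i l\<bar>) \<le> 3 * B"
proof -
  have "(\<Sum>l\<in>{1..K}. \<bar>c i l\<bar>) = (\<Sum>l\<in>{1..K} \<inter> {i - 1..i + 1}. \<bar>c i l\<bar>)"
  proof (rule sum.mono_neutral_right)
    show "\<forall>l\<in>{1..K} - {1..K} \<inter> {i - 1..i + 1}. \<bar>c i l\<bar> = 0"
    proof
      fix l assume "l \<in> {1..K} - {1..K} \<inter> {i - 1..i + 1}"
      then have "l \<notin> {i - 1..i + 1}" by blast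
      then have "c i l = 0" using loc by blast
      then show "\<bar>c i l\<bar> = 0" by simp
    qed
  qed auto
  also have "\<dots> \<le> real (card ({1..K} \<inter> {i - 1..i + 1})) * B"
    using B by (intro sum_bounded_above) auto
  also have "\<dots> \<le> 3 * B"
  proof -
    have "card ({1..K} \<inter> {i - 1..i + 1}) \<le> card {i - 1..i + 1}" by (intro card_mono) auto
    also have "\<dots> \<le> 3" by simp
    finally have "real (card ({1..K} \<inter> {i - 1..i + 1})) \<le> 3" by simp
    then show ?thesis using B0 by (simp add: mult_right_mono)
  qed
  finally show ?thesis .
qed

theorem mainTheorem8:
  fixes M :: "nat \<Rightarrow> 'a measure"
    and W :: "nat \<Rightarrow> nat \<Rightarrow> 'a \<Rightarrow> real"
    and p :: "nat \<Rightarrow> nat \<Rightarrow> real"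
    and d1 :: "nat \<Rightarrow> nat"
    and r \<rho> C \<epsilon> :: real
  assumes prob: "\<And>K. prob_space (M K)"
    and meas: "\<And>K i. i \<in> {1..K} \<Longrightarrow> W K i \<in> borel_measurable (M K)"
    and sq_int: "\<And>K i. i \<in> {1..K} \<Longrightarrow> integrable (M K) (\<lambda>x. (W K i x)\<^sup>2)"
    \<comment> \<open>(S) and (L)\<close>
    and d1_le: "\<And>K. d1 K \<le> K"
    and d1_lim: "filterlim d1 at_top sequentially"
    and r_pos: "0 < r"
    and ratio_lim: "(\<lambda>K. real (K - d1 K) / real (d1 K)) \<longlonglongrightarrow> r"
    \<comment> \<open>(MA1)\<close>
    and MA1: "\<And>K i j. i \<in> {1..K} \<Longrightarrow> j \<in> {1..K} \<Longrightarrow>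
        cov (M K) (W K i) (W K j) =
          (if i = j then 1 else 0) + \<rho> * (if \<bar>int i - int j\<bar> = 1 then 1 else 0)"
    and rho_bd: "\<bar>\<rho>\<bar> < 1/2"
    \<comment> \<open>(MA2)\<close>
    and MA2: "\<And>K i. K \<ge> 1 \<Longrightarrow> i \<in> {1..K} \<Longrightarrow> \<bar>p K i\<bar> \<le> C / sqrt (real K)"
    \<comment> \<open>(MA3)\<close>
    and MA3: "\<exists>L::ereal. ((\<lambda>K. ereal (\<rho> * (\<Sum>i=1..K-1. p K i * p K (i+1))
                                  / (\<Sum>i=1..K. (p K i)\<^sup>2))) \<longlongrightarrow> L) sequentially"
    \<comment> \<open>(MA4)\<close>
    and eps_pos: "0 < \<epsilon>"
    and MA4: "\<And>K. K \<ge> 1 \<Longrightarrow> var (M K) (\<lambda>x. \<Sum>i=1..K. p K i * W K i x) > \<epsilon>"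
  shows "cond_P M W p d1"
proof -
  define m where "m i j = (if i = j then 1 else 0) + \<rho> * (if \<bar>int i - int j\<bar> = 1 then 1 else 0)" for i j :: nat
  define S2 where "S2 K = (\<Sum>i=1..K. (p K i)\<^sup>2)" for K
  define S1 where "S1 K = (\<Sum>i\<in>{1..<K}. p K i * p K (i+1))" for K
  define V where "V K = var (M K) (\<lambda>x. \<Sum>i=1..K. p K i * W K i x)" for K
  have cv: "cov (M K) (\<lambda>x. p K i * W K i x) (\<lambda>x. p K j * W K j x) = p K i * p K j * m i j"
    if "i \<in> {1..K}" "j \<in> {1..K}" for K i j
    using that by (simp add: cov_scale MA1 m_def)
  have vi: "var (M K) (\<lambda>x. p K i * W K i x) = (p K i)\<^sup>2" if "i \<in> {1..K}" for K i
    using cv[OF that that] by (simp add: var_cov m_def power2_eq_square)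
  have VS: "V K = S2 K + 2 * \<rho> * S1 K" for K
  proof -
    have m1: "(\<lambda>x. p K i * W K i x) \<in> borel_measurable (M K)" if "i \<in> {1..K}" for i
      using meas[OF that] by simp
    have m2: "integrable (M K) (\<lambda>x. (p K i * W K i x)\<^sup>2)" if "i \<in> {1..K}" for i
      using sq_int[OF that] by (simp add: power_mult_distrib)
    have "V K = (\<Sum>i=1..K. \<Sum>j=1..K. cov (M K) (\<lambda>x. p K i * W K i x) (\<lambda>x. p K j * W K j x))"
      unfolding V_def by (rule var_sum[OF prob]) (use m1 m2 in auto)
    also have "\<dots> = (\<Sum>i=1..K. \<Sum>j=1..K. p K i * p K j * m i j)"
      by (intro sum.cong refl) (simp add: cv)
    also have "\<dots> = (\<Sum>i=1..K. \<Sum>j=1..K. p K i * p K j * (if i = j then 1 else 0))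
        + \<rho> * (\<Sum>i=1..K. \<Sum>j=1..K. p K i * p K j * (if \<bar>int i - int j\<bar> = 1 then 1 else 0))"
      unfolding m_def by (simp add: distrib_left sum.distrib sum_distrib_left algebra_simps)
    also have "\<dots> = S2 K + 2 * \<rho> * S1 K"
      unfolding diag_sum adj_sum S2_def S1_def by simp
    finally show ?thesis .
  qed
  have C0: "0 \<le> C" using MA2[of 1 1] by simp
  have pb: "\<bar>p K i\<bar> \<le> C / sqrt (real K)" "(p K i)\<^sup>2 \<le> C\<^sup>2 / real K" if "K \<ge> 1" "i \<in> {1..K}" for K i
  proof -
    show a: "\<bar>p K i\<bar> \<le> C / sqrt (real K)" by (rule MA2[OF that])
    have "\<bar>p K i\<bar>\<^sup>2 \<le> (C / sqrt (real K))\<^sup>2" by (rule power_mono[OF a]) simp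
    then show "(p K i)\<^sup>2 \<le> C\<^sup>2 / real K" using that by (simp add: power_divide)
  qed
  have S20: "0 \<le> S2 K" for K unfolding S2_def by (simp add: sum_nonneg)
  have S2b: "S2 K \<le> C\<^sup>2" if "K \<ge> 1" for K
  proof -
    have "S2 K \<le> (\<Sum>i=1..K. C\<^sup>2 / real K)" unfolding S2_def using pb(2)[OF that] by (intro sum_mono) auto
    also have "\<dots> = C\<^sup>2" using that by simp
    finally show ?thesis .
  qed
  have S1b: "\<bar>S1 K\<bar> \<le> S2 K" for K unfolding S1_def S2_def by (rule cs_adj)
  have rS1: "\<bar>\<rho> * S1 K\<bar> \<le> S2 K / 2" for K
  proof -
    have "\<bar>\<rho>\<bar> * \<bar>S1 K\<bar> \<le> (1/2) * S2 K" using rho_bd S1b[of K] by (intro mult_mono) auto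
    then show ?thesis by (simp add: abs_mult)
  qed
  have Vup: "V K \<le> 2 * S2 K" for K unfolding VS using rS1[of K] by (simp add: abs_le_iff)
  have Vlo: "\<epsilon> < V K" if "K \<ge> 1" for K unfolding V_def using MA4[OF that] .
  have S2pos: "0 < S2 K" if "K \<ge> 1" for K using Vup[of K] Vlo[OF that] eps_pos by linarith
  have P1: "\<exists>\<epsilon> Mb. 0 < \<epsilon> \<and> \<epsilon> \<le> Mb \<and>
        (\<forall>K\<ge>1. \<epsilon> \<le> var (M K) (\<lambda>x. \<Sum>i=1..K. p K i * W K i x)
               \<and> var (M K) (\<lambda>x. \<Sum>i=1..K. p K i * W K i x) \<le> Mb)"
  proof (intro exI conjI allI impI)
    show "0 < \<epsilon>" by fact
    show "\<epsilon> \<le> 2 * C\<^sup>2 + \<epsilon>" by simp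
    fix K :: nat assume K: "K \<ge> 1"
    show "\<epsilon> \<le> var (M K) (\<lambda>x. \<Sum>i=1..K. p K i * W K i x)" using Vlo[OF K] unfolding V_def by simp
    show "var (M K) (\<lambda>x. \<Sum>i=1..K. p K i * W K i x) \<le> 2 * C\<^sup>2 + \<epsilon>"
      using Vup[of K] S2b[OF K] eps_pos unfolding V_def by linarith
  qed
  have P3: "\<exists>L::real. (\<lambda>K. (\<Sum>i=1..K. var (M K) (\<lambda>x. p K i * W K i x))
                      / var (M K) (\<lambda>x. \<Sum>i=1..K. p K i * W K i x)) \<longlonglongrightarrow> L"
  proof -
    define t where "t K = \<rho> * S1 K / S2 K" for K
    have iv: "{1..K - 1} = {1..<K::nat}" for K by auto
    obtain L :: ereal where L: "((\<lambda>K. ereal (t K)) \<longlongrightarrow> L) sequentially"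
      using MA3 unfolding t_def S1_def S2_def iv by blast
    have tb: "\<bar>t K\<bar> \<le> \<bar>\<rho>\<bar>" if "K \<ge> 1" for K
    proof -
      have "\<bar>t K\<bar> = \<bar>\<rho>\<bar> * \<bar>S1 K\<bar> / S2 K" unfolding t_def using S2pos[OF that] by (simp add: abs_mult)
      also have "\<dots> \<le> \<bar>\<rho>\<bar> * S2 K / S2 K"
        using S1b[of K] S2pos[OF that] by (intro divide_right_mono mult_left_mono) auto
      also have "\<dots> = \<bar>\<rho>\<bar>" using S2pos[OF that] by simp
      finally show ?thesis .
    qed
    have ev1: "eventually (\<lambda>K. (1::nat) \<le> K) sequentially" by (rule eventually_ge_at_top)
    have e1: "eventually (\<lambda>K. ereal (t K) \<le> ereal \<bar>\<rho>\<bar>) sequentially"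
      using ev1 by (rule eventually_mono) (use tb in \<open>auto simp: abs_le_iff\<close>)
    have e2: "eventually (\<lambda>K. ereal (- \<bar>\<rho>\<bar>) \<le> ereal (t K)) sequentially"
      using ev1
    proof (rule eventually_mono)
      fix K :: nat assume "1 \<le> K"
      then have "\<bar>t K\<bar> \<le> \<bar>\<rho>\<bar>" by (rule tb)
      then show "ereal (- \<bar>\<rho>\<bar>) \<le> ereal (t K)" by simp
    qed
    have Lup: "L \<le> ereal \<bar>\<rho>\<bar>"
      by (rule tendsto_le[OF trivial_limit_sequentially tendsto_const L e1])
    have Llo: "ereal (- \<bar>\<rho>\<bar>) \<le> L"
      by (rule tendsto_le[OF trivial_limit_sequentially L tendsto_const e2])
    obtain l where Ll: "L = ereal l" using Lup Llo by (cases L) auto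
    have lb: "\<bar>l\<bar> \<le> \<bar>\<rho>\<bar>" using Lup Llo unfolding Ll by auto
    have tl: "t \<longlonglongrightarrow> l" using L unfolding Ll by simp
    have nz: "1 + 2 * l \<noteq> 0" using lb rho_bd by auto
    have lim: "(\<lambda>K. 1 / (1 + 2 * t K)) \<longlonglongrightarrow> 1 / (1 + 2 * l)"
      by (intro tendsto_intros tl nz)
    have ev: "eventually (\<lambda>K. 1 / (1 + 2 * t K) = (\<Sum>i=1..K. var (M K) (\<lambda>x. p K i * W K i x))
                      / var (M K) (\<lambda>x. \<Sum>i=1..K. p K i * W K i x)) sequentially"
      using ev1
    proof (rule eventually_mono)
      fix K :: nat assume K: "1 \<le> K"
      have "(\<Sum>i=1..K. var (M K) (\<lambda>x. p K i * W K i x)) = S2 K"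
        unfolding S2_def by (rule sum.cong) (auto simp: vi)
      moreover have "var (M K) (\<lambda>x. \<Sum>i=1..K. p K i * W K i x) = S2 K + 2 * \<rho> * S1 K"
        using VS[of K] unfolding V_def .
      moreover have "S2 K + 2 * \<rho> * S1 K \<noteq> 0" using Vlo[OF K] eps_pos VS[of K] by simp
      ultimately show "1 / (1 + 2 * t K) = (\<Sum>i=1..K. var (M K) (\<lambda>x. p K i * W K i x))
                      / var (M K) (\<lambda>x. \<Sum>i=1..K. p K i * W K i x)"
        using S2pos[OF K] unfolding t_def by (simp add: field_simps)
    qed
    show ?thesis using lim tendsto_cong[OF ev] by blast
  qed
  define F where "F K X = (\<Sum>i\<in>X. \<Sum>j\<in>X. cov (M K) (\<lambda>x. p K i * W K i x) (\<lambda>x. p K j * W K j x))" for K X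
  have Fb: "Vr {T. T \<subseteq> {1..K} \<and> card T = d} (F K) \<le> 576 * C ^ 4 / real K"
    if K: "K \<ge> 1" and dK: "d \<le> K" for K d
  proof -
    define c where "c i j = p K i * p K j * m i j" for i j
    define B where "B = 2 * C\<^sup>2 / real K"
    have B0: "0 \<le> B" unfolding B_def by simp
    have cB: "\<bar>c i j\<bar> \<le> B" if "i \<in> {1..K}" "j \<in> {1..K}" for i j
    proof -
      have "\<bar>p K i\<bar> * \<bar>p K j\<bar> \<le> (C / sqrt (real K)) * (C / sqrt (real K))"
        using pb(1)[OF K that(1)] pb(1)[OF K that(2)] by (intro mult_mono) auto
      also have "\<dots> = C\<^sup>2 / real K" using K by (simp add: power2_eq_square[symmetric] power_divide)
      finally have pp: "\<bar>p K i\<bar> * \<bar>p K j\<bar> \<le> C\<^sup>2 / real K" .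
      have mm: "\<bar>m i j\<bar> \<le> 2" unfolding m_def using rho_bd by auto
      have "\<bar>c i j\<bar> = (\<bar>p K i\<bar> * \<bar>p K j\<bar>) * \<bar>m i j\<bar>" unfolding c_def by (simp add: abs_mult)
      also have "\<dots> \<le> (C\<^sup>2 / real K) * 2" using pp mm by (intro mult_mono) auto
      finally show ?thesis unfolding B_def by (simp add: mult.commute)
    qed
    have mloc: "m i j \<noteq> 0 \<Longrightarrow> j \<in> {i - 1..i + 1} \<and> i \<in> {j - 1..j + 1}" for i j
      unfolding m_def by (cases "i = j") (auto split: if_splits)
    have rows: "(\<Sum>l\<in>{1..K}. \<bar>c i l\<bar>) \<le> 3 * B" if "i \<in> {1..K}" for i
      by (rule row_local[OF _ _ B0]) (use cB that mloc in \<open>auto simp: c_def\<close>)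
    have cols: "(\<Sum>i\<in>{1..K}. \<bar>c i l\<bar>) \<le> 3 * B" if "l \<in> {1..K}" for l
      using row_local[of K "\<lambda>a b. c b a" l B] cB that mloc B0 by (auto simp: c_def)
    have "Vr {T. T \<subseteq> {1..K} \<and> card T = d} (F K) = Vr {T. T \<subseteq> {1..K} \<and> card T = d} (\<lambda>T. \<Sum>i\<in>T. \<Sum>j\<in>T. c i j)"
    proof (rule Vr_cong)
      fix T assume "T \<in> {T. T \<subseteq> {1..K} \<and> card T = d}"
      then have T: "T \<subseteq> {1..K}" by simp
      show "F K T = (\<Sum>i\<in>T. \<Sum>j\<in>T. c i j)" unfolding F_def c_def
        by (intro sum.cong refl) (use T cv in blast)
    qed
    also have "\<dots> \<le> 16 * real K * (3 * B)\<^sup>2"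
      by (rule quad_signed[OF dK _ rows cols]) (use B0 in simp)
    also have "\<dots> = 576 * C ^ 4 / real K" unfolding B_def using K
      by (simp add: power2_eq_square field_simps power4_eq_xxxx)
    finally show ?thesis .
  qed
  have vpos: "0 \<le> var (measure_pmf (sel_law K d)) G" for K d G
    unfolding var_def by (simp add: integral_nonneg_AE)
  have lim0: "(\<lambda>K. 576 * C ^ 4 / real K) \<longlonglongrightarrow> 0" by (rule lim_const_over_n)
  have ev1: "eventually (\<lambda>K. (1::nat) \<le> K) sequentially" by (rule eventually_ge_at_top)
  have P2a: "(\<lambda>K. var (measure_pmf (sel_law K (d1 K))) (F K)) \<longlonglongrightarrow> 0"
  proof (rule tendsto_sandwich[OF _ _ tendsto_const lim0])
    show "\<forall>\<^sub>F K in sequentially. 0 \<le> var (measure_pmf (sel_law K (d1 K))) (F K)"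
      using vpos by simp
    show "\<forall>\<^sub>F K in sequentially. var (measure_pmf (sel_law K (d1 K))) (F K) \<le> 576 * C ^ 4 / real K"
      using ev1
    proof (rule eventually_mono)
      fix K :: nat assume K: "1 \<le> K"
      have "var (measure_pmf (sel_law K (d1 K))) (F K) = Vr {T. T \<subseteq> {1..K} \<and> card T = d1 K} (F K)"
        unfolding sel_law_def by (rule var_pmf_Vr[OF S_fin_ne[OF d1_le]])
      then show "var (measure_pmf (sel_law K (d1 K))) (F K) \<le> 576 * C ^ 4 / real K"
        using Fb[OF K d1_le] by simp
    qed
  qed
  have P2b: "(\<lambda>K. var (measure_pmf (sel_law K (d1 K))) (\<lambda>T. F K ({1..K} - T))) \<longlonglongrightarrow> 0"
  proof (rule tendsto_sandwich[OF _ _ tendsto_const lim0])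
    show "\<forall>\<^sub>F K in sequentially. 0 \<le> var (measure_pmf (sel_law K (d1 K))) (\<lambda>T. F K ({1..K} - T))"
      using vpos by simp
    show "\<forall>\<^sub>F K in sequentially. var (measure_pmf (sel_law K (d1 K))) (\<lambda>T. F K ({1..K} - T)) \<le> 576 * C ^ 4 / real K"
      using ev1
    proof (rule eventually_mono)
      fix K :: nat assume K: "1 \<le> K"
      have "var (measure_pmf (sel_law K (d1 K))) (\<lambda>T. F K ({1..K} - T)) = Vr {T. T \<subseteq> {1..K} \<and> card T = d1 K} (\<lambda>T. F K ({1..K} - T))"
        unfolding sel_law_def by (rule var_pmf_Vr[OF S_fin_ne[OF d1_le]])
      also have "\<dots> = Vr {T. T \<subseteq> {1..K} \<and> card T = K - d1 K} (F K)"
        by (rule Vr_compl[OF d1_le])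
      finally show "var (measure_pmf (sel_law K (d1 K))) (\<lambda>T. F K ({1..K} - T)) \<le> 576 * C ^ 4 / real K"
        using Fb[OF K, of "K - d1 K"] by simp
    qed
  qed
  show ?thesis unfolding cond_P_def using P1 P3 P2a P2b unfolding F_def by blast
qed

end
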